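(* Let $p_U=(p_1,\dots,p_M)$ be a probability distribution on $\{1,\dots,M\}$ with all $p_i>0$, and let $m$ be a positive integer with $m> -\log_2\min_i p_i$. Let $V$ be uniformly distributed on a set of $2^m$ elements (equivalently, $V=(C_1,\dots,C_m)$ with $C_j$ i.i.d. Bernoulli-$\tfrac12$). Then there exists a map $f$ from the $2^m$ values of $V$ to $\{1,\dots,M\}$ such that $U'=f(V)$ has a distribution $p_{U'}$ with every entry a positive integer multiple of $2^{-m}$ and $$D(p_U\,\|\,p_{U'})=\sum_{i=1}^M p_U(i)\ln\frac{p_U(i)}{p_{U'}(i)}\le M\,2^{-m+1}.$$
   Context: $D(\cdot\|\cdot)$ denotes the Kullback–Leibler divergence, here with the natural logarithm. *)

theory Defs
  imports Complex_Main
begin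

definition pushforward_unif :: "nat \<Rightarrow> (nat \<Rightarrow> nat) \<Rightarrow> nat \<Rightarrow> real" where
  "pushforward_unif m f i = real (card {v \<in> {..<(2::nat)^m}. f v = i}) / 2 ^ m"

definition KL_div :: "nat \<Rightarrow> (nat \<Rightarrow> real) \<Rightarrow> (nat \<Rightarrow> real) \<Rightarrow> real" where
  "KL_div M p q = (\<Sum>i=1..M. p i * ln (p i / q i))"

end

theory Submission
  imports Defs
begin

lemma kl_bound:
  fixes M :: nat and N :: real and p q :: "nat \<Rightarrow> real"
  assumes N: "N > 0" and pp: "\<forall>i\<in>{1..M}. p i > 0" and qb: "\<forall>i\<in>{1..M}. q i \<ge> 1/N"
    and d: "\<forall>i\<in>{1..M}. \<bar>p i - q i\<bar> \<le> 1/N"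
    and sp: "(\<Sum>i=1..M. p i) = 1" and sq: "(\<Sum>i=1..M. q i) = 1"
  shows "KL_div M p q \<le> real M / N"
proof -
  have t: "p i * ln (p i / q i) \<le> (p i - q i)^2 / q i + (p i - q i)" if i: "i \<in> {1..M}" for i
  proof -
    have qp: "q i > 0" using qb i N by (meson less_le_trans divide_pos_pos zero_less_one)
    have pi: "p i > 0" using pp i by auto
    have "ln (p i / q i) \<le> p i / q i - 1" using qp pi by (intro ln_le_minus_one) simp
    hence "p i * ln (p i / q i) \<le> p i * (p i / q i - 1)" using pi by (simp add: mult_left_mono)
    also have "\<dots> = (p i - q i)^2 / q i + (p i - q i)" using qp
      by (simp add: field_simps power2_eq_square)
    finally show ?thesis .
  qed
  have u: "(p i - q i)^2 / q i \<le> 1 / N" if i: "i \<in> {1..M}" for i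
  proof -
    have qp: "q i > 0" using qb i N by (meson less_le_trans divide_pos_pos zero_less_one)
    have "(p i - q i)^2 = \<bar>p i - q i\<bar>^2" by simp
    also have "\<dots> \<le> (1/N)^2" using d i by (intro power_mono) auto
    finally have a: "(p i - q i)^2 \<le> (1/N)^2" .
    have "(p i - q i)^2 / q i \<le> (1/N)^2 / q i" using a qp by (simp add: divide_right_mono)
    also have "\<dots> \<le> (1/N)^2 / (1/N)" using qb i N qp
      by (intro divide_left_mono) auto
    also have "\<dots> = 1/N" using N by (simp add: power2_eq_square)
    finally show ?thesis .
  qed
  have "KL_div M p q \<le> (\<Sum>i=1..M. (p i - q i)^2 / q i + (p i - q i))"
    unfolding KL_div_def using t by (intro sum_mono) auto
  also have "\<dots> = (\<Sum>i=1..M. (p i - q i)^2 / q i)"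
    using sp sq by (simp add: sum.distrib sum_subtractf)
  also have "\<dots> \<le> (\<Sum>i=1..M. 1 / N)" using u by (intro sum_mono) auto
  also have "\<dots> = real M / N" by simp
  finally show ?thesis .
qed

theorem mainTheorem3:
  fixes M m :: nat and p :: "nat \<Rightarrow> real"
  assumes "M \<ge> 1"
    and "\<forall>i\<in>{1..M}. p i > 0"
    and "(\<Sum>i=1..M. p i) = 1"
    and "m > 0"
    and "real m > - log 2 (Min (p ` {1..M}))"
  shows "\<exists>f :: nat \<Rightarrow> nat.
           (\<forall>v<(2::nat)^m. f v \<in> {1..M}) \<and>
           (\<forall>i\<in>{1..M}. \<exists>k::nat. k \<ge> 1 \<and> pushforward_unif m f i = real k / 2 ^ m) \<and>
           KL_div M p (pushforward_unif m f) \<le> real M * 2 powr (1 - real m)"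
proof -
  note M1 = assms(1) and pp = assms(2) and sp = assms(3) and lg = assms(5)
  define N where "N = (2::nat)^m"
  have Nr: "real N = 2^m" unfolding N_def by simp
  have Npos: "N > 0" unfolding N_def by simp
  define P where "P i = (\<Sum>j=1..i. p j)" for i
  define F where "F i = \<lfloor>real N * P i\<rfloor>" for i
  define S where "S i = nat (F i)" for i
  define f where "f v = (LEAST i. v < S i)" for v
  have P0: "P 0 = 0" unfolding P_def by simp
  have F0: "F 0 = 0" unfolding F_def P0 by simp
  have PM: "P M = 1" unfolding P_def using sp by simp
  have FM: "F M = int N" unfolding F_def PM by simp
  have SM: "S M = N" unfolding S_def FM by simp
  have S0: "S 0 = 0" unfolding S_def F0 by simp
  have Psuc: "P (Suc i) = P i + p (Suc i)" for i unfolding P_def by (simp add: sum.cl_ivl_Suc)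
  have minpos: "Min (p ` {1..M}) > 0" using pp M1 by (subst Min_gr_iff) auto
  have "log 2 (Min (p ` {1..M})) > - real m" using lg by linarith
  hence "Min (p ` {1..M}) > 2 powr (- real m)"
    using minpos by (metis less_log_iff one_less_numeral_iff semiring_norm(76))
  hence mn: "Min (p ` {1..M}) > 1 / 2^m" by (simp add: powr_minus powr_realpow divide_inverse)
  have Np: "real N * p i > 1" if i: "i \<in> {1..M}" for i
  proof -
    have "p i \<ge> Min (p ` {1..M})" using i by (intro Min_le) auto
    hence "p i > 1 / 2^m" using mn by linarith
    thus ?thesis unfolding Nr by (simp add: field_simps)
  qed
  have Pmono: "P i \<le> P j" if "i \<le> j" "j \<le> M" for i j
    unfolding P_def using that pp by (intro sum_mono2) (auto intro: less_imp_le)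
  have Fmono: "F i \<le> F j" if "i \<le> j" "j \<le> M" for i j
    unfolding F_def using Pmono[OF that] by (intro floor_mono mult_left_mono) auto
  have Fnn: "F i \<ge> 0" if "i \<le> M" for i using Fmono[of 0 i] that F0 by simp
  have Smono: "S i \<le> S j" if "i \<le> j" "j \<le> M" for i j
    unfolding S_def using Fmono[OF that] by simp
  have Fd: "F i - F (i - 1) \<ge> 1 \<and> \<bar>real_of_int (F i - F (i-1)) - real N * p i\<bar> < 1"
    if i: "i \<in> {1..M}" for i
  proof -
    obtain j where j: "i = Suc j" using i by (cases i) auto
    have e: "real N * P i = real N * P j + real N * p i" unfolding j Psuc by (simp add: algebra_simps)
    have a1: "real_of_int (F i) > real N * P i - 1" "real_of_int (F i) \<le> real N * P i"
      unfolding F_def by linarith+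
    have a2: "real_of_int (F j) > real N * P j - 1" "real_of_int (F j) \<le> real N * P j"
      unfolding F_def by linarith+
    have b: "real N * p i > 1" using Np i .
    have "real_of_int (F i - F j) > 0" using a1 a2 b e by simp
    hence "F i - F j \<ge> 1" by simp
    moreover have "\<bar>real_of_int (F i - F j) - real N * p i\<bar> < 1" using a1 a2 e by simp
    ultimately show ?thesis using j by simp
  qed
  define k where "k i = nat (F i - F (i - 1))" for i
  have kr: "real (k i) = real_of_int (F i) - real_of_int (F (i - 1))" if "i \<in> {1..M}" for i
    using Fd[OF that] unfolding k_def by simp
  have fin: "f v \<in> {1..M}" if v: "v < N" for v
  proof -
    have "v < S M" using v SM by simp
    hence le: "f v \<le> M" unfolding f_def by (rule Least_le)
    have "v < S (f v)" unfolding f_def using \<open>v < S M\<close> by (rule LeastI)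
    hence "f v \<noteq> 0" using S0 by (metis less_nat_zero_code)
    thus ?thesis using le by auto
  qed
  have cardk: "card {v \<in> {..<N}. f v = i} = k i" if i: "i \<in> {1..M}" for i
  proof -
    have "{v \<in> {..<N}. f v = i} = {S (i - 1)..<S i}"
    proof (intro set_eqI iffI)
      fix v assume "v \<in> {v \<in> {..<N}. f v = i}"
      hence v: "v < N" "f v = i" by auto
      have "v < S M" using v SM by simp
      hence "v < S (f v)" unfolding f_def by (rule LeastI)
      moreover have "\<not> v < S (i - 1)"
        using not_less_Least[of "i - 1" "\<lambda>j. v < S j"] v i unfolding f_def by auto
      ultimately show "v \<in> {S (i - 1)..<S i}" using v by auto
    next
      fix v assume v: "v \<in> {S (i - 1)..<S i}"
      have "S i \<le> N" using Smono[of i M] i SM by auto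
      hence "v < N" using v by auto
      moreover have "f v = i" unfolding f_def
      proof (rule Least_equality)
        show "v < S i" using v by auto
        fix y assume y: "v < S y"
        show "i \<le> y"
        proof (rule ccontr)
          assume "\<not> i \<le> y"
          hence "S y \<le> S (i - 1)" using i by (intro Smono) auto
          thus False using y v by auto
        qed
      qed
      ultimately show "v \<in> {v \<in> {..<N}. f v = i}" by auto
    qed
    hence "card {v \<in> {..<N}. f v = i} = S i - S (i - 1)" by simp
    also have "\<dots> = k i" unfolding S_def k_def using Fnn[of i] Fnn[of "i - 1"] i by (auto intro!: nat_diff_distrib' [symmetric])
    finally show ?thesis .
  qed
  have pf: "pushforward_unif m f i = real (k i) / real N" if "i \<in> {1..M}" for i
    unfolding pushforward_unif_def using cardk[OF that] Nr N_def by simp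
  have tel: "(\<Sum>i=1..n. real_of_int (F i) - real_of_int (F (i - 1))) = real_of_int (F n) - real_of_int (F 0)" for n
    by (induction n) (auto simp: sum.cl_ivl_Suc)
  have sq: "(\<Sum>i=1..M. pushforward_unif m f i) = 1"
  proof -
    have "(\<Sum>i=1..M. pushforward_unif m f i) = (\<Sum>i=1..M. (real_of_int (F i) - real_of_int (F (i - 1))) / real N)"
      using pf kr by (intro sum.cong) auto
    also have "\<dots> = (\<Sum>i=1..M. real_of_int (F i) - real_of_int (F (i - 1))) / real N"
      by (simp add: sum_divide_distrib)
    also have "\<dots> = 1" unfolding tel FM F0 using Npos by simp
    finally show ?thesis .
  qed
  have KL: "KL_div M p (pushforward_unif m f) \<le> real M / real N"
  proof (rule kl_bound)
    show "real N > 0" using Npos by simp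
    show "\<forall>i\<in>{1..M}. 0 < p i" using pp .
    show "(\<Sum>i=1..M. p i) = 1" using sp .
    show "(\<Sum>i=1..M. pushforward_unif m f i) = 1" using sq .
    show "\<forall>i\<in>{1..M}. 1 / real N \<le> pushforward_unif m f i"
    proof
      fix i assume i: "i \<in> {1..M}"
      have "k i \<ge> 1" using Fd[OF i] unfolding k_def by linarith
      thus "1 / real N \<le> pushforward_unif m f i" unfolding pf[OF i] using Npos
        by (simp add: divide_right_mono)
    qed
    show "\<forall>i\<in>{1..M}. \<bar>p i - pushforward_unif m f i\<bar> \<le> 1 / real N"
    proof
      fix i assume i: "i \<in> {1..M}"
      have a: "\<bar>real (k i) - real N * p i\<bar> < 1" using Fd[OF i] kr[OF i] by simp
      have "\<bar>p i - real (k i) / real N\<bar> = \<bar>real (k i) - real N * p i\<bar> / real N"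
        using Npos by (simp add: field_simps abs_minus_commute)
      also have "\<dots> \<le> 1 / real N" using a Npos by (simp add: divide_right_mono)
      finally show "\<bar>p i - pushforward_unif m f i\<bar> \<le> 1 / real N" unfolding pf[OF i] .
    qed
  qed
  have "real M / real N \<le> real M * 2 powr (1 - real m)"
  proof -
    have "2 powr (1 - real m) = 2 / 2^m" by (simp add: powr_diff powr_realpow)
    hence "real M * 2 powr (1 - real m) = 2 * (real M / real N)" unfolding Nr by simp
    thus ?thesis using Npos by (simp add: divide_right_mono)
  qed
  with KL have "KL_div M p (pushforward_unif m f) \<le> real M * 2 powr (1 - real m)" by linarith
  moreover have "\<forall>v<(2::nat)^m. f v \<in> {1..M}" using fin N_def by auto
  moreover have "\<forall>i\<in>{1..M}. \<exists>k::nat. k \<ge> 1 \<and> pushforward_unif m f i = real k / 2 ^ m"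
  proof
    fix i assume i: "i \<in> {1..M}"
    have "k i \<ge> 1" using Fd[OF i] unfolding k_def by linarith
    thus "\<exists>k::nat. k \<ge> 1 \<and> pushforward_unif m f i = real k / 2 ^ m" using pf[OF i] Nr by auto
  qed
  ultimately show ?thesis by blast
qed

end
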